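(* Let $X$ be an Alexandroff $T_0$-space and let $\varphi:\mathbb{R}\times X\rightarrow X$ be a flow. Then $\varphi$ is trivial, i.e. $\varphi(t,x)=x$ for every $t\in\mathbb{R}$ and every $x\in X$.
   Context: An Alexandroff space is a topological space in which arbitrary intersections of open sets are open. A flow on a topological space $X$ is a continuous map $\varphi:\mathbb{R}\times X\to X$ (with $\mathbb{R}$ carrying its usual topology and $\mathbb{R}\times X$ the product topology) such that $\varphi(0,x)=x$ and $\varphi(s+t,x)=\varphi(s,\varphi(t,x))$ for all $s,t\in\mathbb{R}$, $x\in X$. *)

theory Defs
  imports "HOL-Analysis.Analysis"
begin

text \<open>Alexandroff space: arbitrary intersections of open sets are open
 (intersections taken inside the space, so the empty family gives the whole space).\<close>
definition alexandroff_space :: "'a topology \<Rightarrow> bool" where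
  "alexandroff_space X \<longleftrightarrow>
     (\<forall>\<U>. (\<forall>U\<in>\<U>. openin X U) \<longrightarrow> openin X (topspace X \<inter> \<Inter>\<U>))"

definition is_flow :: "'a topology \<Rightarrow> (real \<times> 'a \<Rightarrow> 'a) \<Rightarrow> bool" where
  "is_flow X \<phi> \<longleftrightarrow>
     continuous_map (prod_topology euclideanreal X) X \<phi> \<and>
     (\<forall>x\<in>topspace X. \<phi> (0, x) = x) \<and>
     (\<forall>s t. \<forall>x\<in>topspace X. \<phi> (s + t, x) = \<phi> (s, \<phi> (t, x)))"

end

theory Submission
  imports Defs
begin

theorem mainTheorem4:
  fixes X :: "'a topology" and \<phi> :: "real \<times> 'a \<Rightarrow> 'a"
  assumes "alexandroff_space X" and "t0_space X" and "is_flow X \<phi>"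
  shows "\<forall>t. \<forall>x\<in>topspace X. \<phi> (t, x) = x"
proof (intro allI ballI)
  fix t x assume x: "x \<in> topspace X"
  have cont: "continuous_map (prod_topology euclideanreal X) X \<phi>"
    and id0: "\<And>x. x\<in>topspace X \<Longrightarrow> \<phi> (0, x) = x"
    and add: "\<And>s t x. x\<in>topspace X \<Longrightarrow> \<phi> (s + t, x) = \<phi> (s, \<phi> (t, x))"
    using assms(3) unfolding is_flow_def by auto
  have top: "\<And>s z. z \<in> topspace X \<Longrightarrow> \<phi> (s, z) \<in> topspace X"
    using cont by (auto simp: continuous_map_def)
  have slice: "continuous_map X X (\<lambda>z. \<phi> (s, z))" for s
    by (rule continuous_map_compose[OF _ cont, unfolded o_def])
       (auto intro!: continuous_map_pairedI)
  have orb: "continuous_map euclideanreal X (\<lambda>t. \<phi> (t, z))" if "z \<in> topspace X" for z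
    by (rule continuous_map_compose[OF _ cont, unfolded o_def])
       (auto intro!: continuous_map_pairedI simp: that)
  define U where "U = topspace X \<inter> \<Inter>{V. openin X V \<and> x \<in> V}"
  have oU: "openin X U" using assms(1) unfolding alexandroff_space_def U_def by auto
  have Ux: "\<And>y V. y \<in> U \<Longrightarrow> openin X V \<Longrightarrow> x \<in> V \<Longrightarrow> y \<in> V" unfolding U_def by auto
  have "openin euclideanreal {s \<in> topspace euclideanreal. \<phi> (s, x) \<in> U}"
    using openin_continuous_map_preimage[OF orb[OF x] oU] .
  hence "open {s. \<phi> (s, x) \<in> U}" by simp
  moreover have "0 \<in> {s. \<phi> (s, x) \<in> U}" using id0[OF x] x by (simp add: U_def)
  ultimately obtain e where e: "e > 0" "ball 0 e \<subseteq> {s. \<phi> (s, x) \<in> U}"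
    by (meson open_contains_ball)
  have small: "\<phi> (r, x) = x" if r: "\<bar>r\<bar> < e" for r
  proof (rule ccontr)
    assume ne: "\<phi> (r, x) \<noteq> x"
    let ?y = "\<phi> (r, x)"
    have yU: "?y \<in> U" using e r by (auto simp: subset_iff dist_norm)
    have myU: "\<phi> (-r, x) \<in> U" using e r by (auto simp: subset_iff dist_norm)
    obtain V where V: "openin X V" "?y \<notin> V \<longleftrightarrow> x \<in> V"
      using assms(2) ne top[OF x] x unfolding t0_space_def by blast
    show False
    proof (cases "x \<in> V")
      case True thus ?thesis using Ux[OF yU V(1)] V(2) by auto
    next
      case False
      hence yV: "?y \<in> V" using V(2) by auto
      define W where "W = {z \<in> topspace X. \<phi> (r, z) \<in> V}"
      have oW: "openin X W" unfolding W_def by (rule openin_continuous_map_preimage[OF slice V(1)])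
      have "x \<in> W" using x yV by (simp add: W_def)
      hence "\<phi> (-r, x) \<in> W" using Ux[OF myU oW] by auto
      hence "\<phi> (r, \<phi> (-r, x)) \<in> V" by (simp add: W_def)
      hence "x \<in> V" using add[OF x, of r "-r"] id0[OF x] by simp
      thus False using False by simp
    qed
  qed
  obtain n :: nat where n: "\<bar>t\<bar> / e < real n" using reals_Archimedean2 by blast
  hence npos: "n > 0" using e by (cases n) (auto simp: divide_less_0_iff)
  define s where "s = t / real n"
  have "\<bar>s\<bar> < e" using n npos e by (auto simp: s_def field_simps abs_divide)
  hence sx: "\<phi> (s, x) = x" by (rule small)
  have "\<phi> (real k * s, x) = x" for k :: nat
  proof (induction k)
    case 0 thus ?case using id0[OF x] by simp
  next
    case (Suc k)
    have "\<phi> (real (Suc k) * s, x) = \<phi> (s + real k * s, x)" by (simp add: algebra_simps)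
    also have "\<dots> = \<phi> (s, \<phi> (real k * s, x))" by (rule add[OF x])
    finally show ?case using Suc sx by simp
  qed
  from this[of n] show "\<phi> (t, x) = x" using npos by (simp add: s_def)
qed

end
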